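(* Let $P$ be a right LCM semigroup with identity and let $\vartheta$ be a right action of $P$ on a group $G$ by identity-preserving endomorphisms. Then the right semidirect product $P{}_\vartheta\!\ltimes G$ is a right LCM semigroup such that $J(P)\cong J(P{}_\vartheta\!\ltimes G)$ (via $pP\mapsto (pP)\times G$, $\emptyset\mapsto\emptyset$) and $(P{}_\vartheta\!\ltimes G)^*=P^*{}_\vartheta\!\ltimes G$. Moreover, $P{}_\vartheta\!\ltimes G$ is cancellative if and only if $P$ is cancellative and every $\vartheta_p$, $p\in P$, is injective.
   Context: A right LCM semigroup is a left cancellative semigroup $P$ with identity $e$ such that for all $p,q\in P$ either $pP\cap qP=\emptyset$ or $pP\cap qP=rP$ for some $r\in P$; $J(P)=\{pP:p\in P\}\cup\{\emptyset\}$ is its semilattice of principal right ideals (under intersection) and $P^*$ its group of invertible elements. A right action of $P$ on $G$ is a unital semigroup antihomomorphism $\vartheta:P\to\operatorname{End}G$, i.e. $\vartheta_e=\mathrm{id}$ and $\vartheta_p\vartheta_q=\vartheta_{qp}$. The right semidirect product $P{}_\vartheta\!\ltimes G$ is the set $P\times G$ with multiplication $(p,g)(q,h)=(pq,\vartheta_q(g)h)$. Cancellative means both left and right cancellative. *)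

theory Defs
  imports Main
begin

definition left_cancellative :: "'a set \<Rightarrow> ('a \<Rightarrow> 'a \<Rightarrow> 'a) \<Rightarrow> bool" where
  "left_cancellative S m \<longleftrightarrow> (\<forall>a\<in>S. \<forall>b\<in>S. \<forall>c\<in>S. m a b = m a c \<longrightarrow> b = c)"

definition right_cancellative :: "'a set \<Rightarrow> ('a \<Rightarrow> 'a \<Rightarrow> 'a) \<Rightarrow> bool" where
  "right_cancellative S m \<longleftrightarrow> (\<forall>a\<in>S. \<forall>b\<in>S. \<forall>c\<in>S. m b a = m c a \<longrightarrow> b = c)"

definition cancellative :: "'a set \<Rightarrow> ('a \<Rightarrow> 'a \<Rightarrow> 'a) \<Rightarrow> bool" where
  "cancellative S m \<longleftrightarrow> left_cancellative S m \<and> right_cancellative S m"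

definition pideal :: "'a set \<Rightarrow> ('a \<Rightarrow> 'a \<Rightarrow> 'a) \<Rightarrow> 'a \<Rightarrow> 'a set" where
  "pideal S m p = {m p x | x. x \<in> S}"

definition monoid_with :: "'a set \<Rightarrow> ('a \<Rightarrow> 'a \<Rightarrow> 'a) \<Rightarrow> 'a \<Rightarrow> bool" where
  "monoid_with S m e \<longleftrightarrow> e \<in> S \<and> (\<forall>a\<in>S. \<forall>b\<in>S. m a b \<in> S)
     \<and> (\<forall>a\<in>S. \<forall>b\<in>S. \<forall>c\<in>S. m (m a b) c = m a (m b c))
     \<and> (\<forall>a\<in>S. m e a = a \<and> m a e = a)"

definition right_LCM :: "'a set \<Rightarrow> ('a \<Rightarrow> 'a \<Rightarrow> 'a) \<Rightarrow> 'a \<Rightarrow> bool" where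
  "right_LCM S m e \<longleftrightarrow> monoid_with S m e \<and> left_cancellative S m \<and>
     (\<forall>p\<in>S. \<forall>q\<in>S. pideal S m p \<inter> pideal S m q = {} \<or>
        (\<exists>r\<in>S. pideal S m p \<inter> pideal S m q = pideal S m r))"

definition Jsl :: "'a set \<Rightarrow> ('a \<Rightarrow> 'a \<Rightarrow> 'a) \<Rightarrow> 'a set set" where
  "Jsl S m = {pideal S m p | p. p \<in> S} \<union> {{}}"

definition invertibles :: "'a set \<Rightarrow> ('a \<Rightarrow> 'a \<Rightarrow> 'a) \<Rightarrow> 'a \<Rightarrow> 'a set" where
  "invertibles S m e = {p \<in> S. \<exists>q\<in>S. m p q = e \<and> m q p = e}"

definition right_action :: "('p::monoid_mult \<Rightarrow> 'g::group_add \<Rightarrow> 'g) \<Rightarrow> bool" where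
  "right_action \<theta> \<longleftrightarrow> \<theta> 1 = id \<and> (\<forall>p q. \<theta> p \<circ> \<theta> q = \<theta> (q * p))
     \<and> (\<forall>p g h. \<theta> p (g + h) = \<theta> p g + \<theta> p h)"

definition sdp_mult :: "('p::monoid_mult \<Rightarrow> 'g::group_add \<Rightarrow> 'g) \<Rightarrow> 'p \<times> 'g \<Rightarrow> 'p \<times> 'g \<Rightarrow> 'p \<times> 'g" where
  "sdp_mult \<theta> x y = (fst x * fst y, \<theta> (fst y) (snd x) + snd y)"

end

theory Submission
  imports Defs
begin

lemma ra_1: "right_action \<theta> \<Longrightarrow> \<theta> 1 g = g"
  by (simp add: right_action_def)

lemma ra_comp: "right_action \<theta> \<Longrightarrow> \<theta> p (\<theta> q g) = \<theta> (q * p) g"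
proof -
  assume "right_action \<theta>"
  then have "\<theta> p \<circ> \<theta> q = \<theta> (q * p)" by (simp add: right_action_def)
  then show ?thesis by (simp add: fun_eq_iff)
qed

lemma ra_add: "right_action \<theta> \<Longrightarrow> \<theta> p (g + h) = \<theta> p g + \<theta> p h"
  by (simp add: right_action_def)

lemma ra_0: "right_action \<theta> \<Longrightarrow> \<theta> p 0 = 0"
proof -
  assume a: "right_action \<theta>"
  have "\<theta> p 0 + 0 = \<theta> p 0 + \<theta> p 0" using ra_add[OF a, of p 0 0] by simp
  then show ?thesis using add_left_cancel by metis
qed

lemma ra_neg: "right_action \<theta> \<Longrightarrow> \<theta> p (- g) = - \<theta> p g"
proof -
  assume a: "right_action \<theta>"
  have "\<theta> p (- g) + \<theta> p g = 0" using ra_add[OF a, of p "-g" g] ra_0[OF a] by simp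
  then show ?thesis by (simp add: eq_neg_iff_add_eq_0)
qed

lemma sdp_pideal:
  assumes a: "right_action \<theta>"
  shows "pideal UNIV (sdp_mult \<theta>) (p, g) = pideal UNIV (*) p \<times> UNIV"
proof (rule set_eqI)
  fix z :: "'a \<times> 'b"
  obtain r k where z: "z = (r, k)" by (cases z)
  show "z \<in> pideal UNIV (sdp_mult \<theta>) (p, g) \<longleftrightarrow> z \<in> pideal UNIV (*) p \<times> UNIV"
  proof
    assume "z \<in> pideal UNIV (sdp_mult \<theta>) (p, g)"
    then show "z \<in> pideal UNIV (*) p \<times> UNIV"
      by (auto simp: pideal_def sdp_mult_def)
  next
    assume "z \<in> pideal UNIV (*) p \<times> UNIV"
    then obtain q where q: "r = p * q" using z by (auto simp: pideal_def)
    have "sdp_mult \<theta> (p, g) (q, - \<theta> q g + k) = z"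
      by (simp add: sdp_mult_def z q add.assoc[symmetric])
    then show "z \<in> pideal UNIV (sdp_mult \<theta>) (p, g)"
      unfolding pideal_def by blast
  qed
qed

theorem mainTheorem18:
  fixes \<theta> :: "'p::monoid_mult \<Rightarrow> 'g::group_add \<Rightarrow> 'g"
  assumes "right_LCM (UNIV :: 'p set) (*) 1"
    and "right_action \<theta>"
  shows "right_LCM (UNIV :: ('p \<times> 'g) set) (sdp_mult \<theta>) (1, 0)
    \<and> bij_betw (\<lambda>X. X \<times> (UNIV :: 'g set)) (Jsl (UNIV :: 'p set) (*)) (Jsl UNIV (sdp_mult \<theta>))
    \<and> (\<forall>X\<in>Jsl (UNIV :: 'p set) (*). \<forall>Y\<in>Jsl (UNIV :: 'p set) (*).
          (X \<inter> Y) \<times> (UNIV :: 'g set) = (X \<times> UNIV) \<inter> (Y \<times> UNIV))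
    \<and> (\<forall>(p::'p) (g::'g). pideal UNIV (sdp_mult \<theta>) (p, g) = pideal UNIV (*) p \<times> (UNIV :: 'g set))
    \<and> invertibles UNIV (sdp_mult \<theta>) (1, 0) = invertibles (UNIV :: 'p set) (*) 1 \<times> (UNIV :: 'g set)
    \<and> (cancellative UNIV (sdp_mult \<theta>) \<longleftrightarrow>
         cancellative (UNIV :: 'p set) (*) \<and> (\<forall>p. inj (\<theta> p)))"
proof -
  note a = assms(2)
  have lc: "left_cancellative (UNIV :: 'p set) (*)" using assms(1) by (simp add: right_LCM_def)
  have lcm: "\<forall>p q. pideal UNIV (*) p \<inter> pideal UNIV (*) q = {} \<or>
        (\<exists>r. pideal UNIV (*) p \<inter> pideal UNIV (*) q = pideal (UNIV :: 'p set) (*) r)"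
    using assms(1) by (simp add: right_LCM_def)
  note pid = sdp_pideal[OF a]
  have mon: "monoid_with (UNIV :: ('p \<times> 'g) set) (sdp_mult \<theta>) (1, 0)"
    unfolding monoid_with_def
    by (auto simp: sdp_mult_def ra_0[OF a] ra_1[OF a] ra_add[OF a] ra_comp[OF a] mult.assoc add.assoc)
  have lc2: "left_cancellative (UNIV :: ('p \<times> 'g) set) (sdp_mult \<theta>)"
    unfolding left_cancellative_def
  proof (intro ballI impI)
    fix x y z :: "'p \<times> 'g" assume e: "sdp_mult \<theta> x y = sdp_mult \<theta> x z"
    obtain p g q h r k where xyz: "x = (p, g)" "y = (q, h)" "z = (r, k)"
      by (cases x, cases y, cases z)
    from e have e1: "p * q = p * r" and e2: "\<theta> q g + h = \<theta> r g + k"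
      by (simp_all add: sdp_mult_def xyz)
    from e1 lc have "q = r" by (simp add: left_cancellative_def)
    with e2 have "h = k" by simp
    then show "y = z" using xyz \<open>q = r\<close> by simp
  qed
  have lcm2: "\<forall>x\<in>(UNIV :: ('p \<times> 'g) set). \<forall>y\<in>UNIV.
      pideal UNIV (sdp_mult \<theta>) x \<inter> pideal UNIV (sdp_mult \<theta>) y = {} \<or>
      (\<exists>r\<in>UNIV. pideal UNIV (sdp_mult \<theta>) x \<inter> pideal UNIV (sdp_mult \<theta>) y = pideal UNIV (sdp_mult \<theta>) r)"
  proof (intro ballI)
    fix x y :: "'p \<times> 'g"
    obtain p g q h where xy: "x = (p, g)" "y = (q, h)" by (cases x, cases y)
    have e: "pideal UNIV (sdp_mult \<theta>) x \<inter> pideal UNIV (sdp_mult \<theta>) y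
       = (pideal UNIV (*) p \<inter> pideal UNIV (*) q) \<times> UNIV"
      using xy pid by auto
    from lcm[rule_format, of p q] show "pideal UNIV (sdp_mult \<theta>) x \<inter> pideal UNIV (sdp_mult \<theta>) y = {} \<or>
      (\<exists>r\<in>UNIV. pideal UNIV (sdp_mult \<theta>) x \<inter> pideal UNIV (sdp_mult \<theta>) y = pideal UNIV (sdp_mult \<theta>) r)"
    proof
      assume "pideal UNIV (*) p \<inter> pideal UNIV (*) q = {}"
      then show ?thesis using e by simp
    next
      assume "\<exists>r. pideal UNIV (*) p \<inter> pideal UNIV (*) q = pideal UNIV (*) r"
      then obtain r where "pideal UNIV (*) p \<inter> pideal UNIV (*) q = pideal UNIV (*) r" by blast
      then have "pideal UNIV (sdp_mult \<theta>) x \<inter> pideal UNIV (sdp_mult \<theta>) y = pideal UNIV (sdp_mult \<theta>) (r, 0)"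
        using e pid by simp
      then show ?thesis by blast
    qed
  qed
  have P1: "right_LCM (UNIV :: ('p \<times> 'g) set) (sdp_mult \<theta>) (1, 0)"
    unfolding right_LCM_def using mon lc2 lcm2 by blast
  have injT: "inj_on (\<lambda>X. X \<times> (UNIV :: 'g set)) A" for A :: "'p set set"
    by (rule inj_onI) auto
  have img: "(\<lambda>X. X \<times> (UNIV :: 'g set)) ` Jsl (UNIV :: 'p set) (*) = Jsl UNIV (sdp_mult \<theta>)"
  proof (rule set_eqI, rule iffI)
    fix Z assume "Z \<in> (\<lambda>X. X \<times> (UNIV :: 'g set)) ` Jsl (UNIV :: 'p set) (*)"
    then obtain X where X: "X \<in> Jsl UNIV (*)" "Z = X \<times> UNIV" by blast
    then show "Z \<in> Jsl UNIV (sdp_mult \<theta>)"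
    proof (cases "X = {}")
      case True then show ?thesis using X by (simp add: Jsl_def)
    next
      case False
      then obtain p where "X = pideal UNIV (*) p" using X by (auto simp: Jsl_def)
      then have "Z = pideal UNIV (sdp_mult \<theta>) (p, 0)" using X pid by simp
      then show ?thesis by (auto simp: Jsl_def)
    qed
  next
    fix Z assume "Z \<in> Jsl UNIV (sdp_mult \<theta>)"
    then show "Z \<in> (\<lambda>X. X \<times> (UNIV :: 'g set)) ` Jsl (UNIV :: 'p set) (*)"
    proof (cases "Z = {}")
      case True
      then have "Z = (\<lambda>X. X \<times> (UNIV :: 'g set)) {}" by simp
      moreover have "{} \<in> Jsl (UNIV :: 'p set) (*)" by (simp add: Jsl_def)
      ultimately show ?thesis by blast
    next
      case False
      then obtain x :: "'p \<times> 'g" where "Z = pideal UNIV (sdp_mult \<theta>) x"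
        using \<open>Z \<in> Jsl UNIV (sdp_mult \<theta>)\<close> by (auto simp: Jsl_def)
      moreover obtain p g where "x = (p, g)" by (cases x)
      ultimately have "Z = (\<lambda>X. X \<times> (UNIV :: 'g set)) (pideal UNIV (*) p)" using pid by simp
      moreover have "pideal UNIV (*) p \<in> Jsl (UNIV :: 'p set) (*)" by (auto simp: Jsl_def)
      ultimately show ?thesis by blast
    qed
  qed
  have P2: "bij_betw (\<lambda>X. X \<times> (UNIV :: 'g set)) (Jsl (UNIV :: 'p set) (*)) (Jsl UNIV (sdp_mult \<theta>))"
    unfolding bij_betw_def using injT img by blast
  have P3: "\<forall>X\<in>Jsl (UNIV :: 'p set) (*). \<forall>Y\<in>Jsl (UNIV :: 'p set) (*).
          (X \<inter> Y) \<times> (UNIV :: 'g set) = (X \<times> UNIV) \<inter> (Y \<times> UNIV)" by auto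
  have P5: "invertibles UNIV (sdp_mult \<theta>) (1, 0) = invertibles (UNIV :: 'p set) (*) 1 \<times> (UNIV :: 'g set)"
  proof (rule set_eqI)
    fix z :: "'p \<times> 'g"
    obtain p g where z: "z = (p, g)" by (cases z)
    show "z \<in> invertibles UNIV (sdp_mult \<theta>) (1, 0) \<longleftrightarrow> z \<in> invertibles UNIV (*) 1 \<times> UNIV"
    proof
      assume "z \<in> invertibles UNIV (sdp_mult \<theta>) (1, 0)"
      then show "z \<in> invertibles UNIV (*) 1 \<times> UNIV"
        by (auto simp: invertibles_def sdp_mult_def z)
    next
      assume "z \<in> invertibles UNIV (*) 1 \<times> UNIV"
      then obtain q where q: "p * q = 1" "q * p = 1" using z by (auto simp: invertibles_def)
      have "sdp_mult \<theta> (p, g) (q, - \<theta> q g) = (1, 0)"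
        using q by (simp add: sdp_mult_def)
      moreover have "sdp_mult \<theta> (q, - \<theta> q g) (p, g) = (1, 0)"
        using q by (simp add: sdp_mult_def ra_neg[OF a] ra_comp[OF a] ra_1[OF a])
      ultimately show "z \<in> invertibles UNIV (sdp_mult \<theta>) (1, 0)"
        unfolding invertibles_def z by blast
    qed
  qed
  have P6: "cancellative UNIV (sdp_mult \<theta>) \<longleftrightarrow>
         cancellative (UNIV :: 'p set) (*) \<and> (\<forall>p. inj (\<theta> p))"
  proof
    assume c: "cancellative UNIV (sdp_mult \<theta>)"
    then have rc0: "right_cancellative UNIV (sdp_mult \<theta>)" by (simp add: cancellative_def)
    have rc: "\<And>x y z. sdp_mult \<theta> y x = sdp_mult \<theta> z x \<Longrightarrow> y = z"
      using rc0 unfolding right_cancellative_def by blast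
    have "right_cancellative (UNIV :: 'p set) (*)"
      unfolding right_cancellative_def
    proof (intro ballI impI)
      fix p q r :: 'p assume "q * p = r * p"
      then have "sdp_mult \<theta> (q, 0) (p, 0) = sdp_mult \<theta> (r, 0) (p, 0)"
        by (simp add: sdp_mult_def ra_0[OF a])
      then show "q = r" using rc by blast
    qed
    moreover have "inj (\<theta> p)" for p
    proof (rule injI)
      fix g h assume "\<theta> p g = \<theta> p h"
      then have "sdp_mult \<theta> (1, g) (p, 0) = sdp_mult \<theta> (1, h) (p, 0)"
        by (simp add: sdp_mult_def)
      then show "g = h" using rc by blast
    qed
    ultimately show "cancellative (UNIV :: 'p set) (*) \<and> (\<forall>p. inj (\<theta> p))"
      using lc by (simp add: cancellative_def)
  next
    assume c: "cancellative (UNIV :: 'p set) (*) \<and> (\<forall>p. inj (\<theta> p))"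
    have "right_cancellative (UNIV :: ('p \<times> 'g) set) (sdp_mult \<theta>)"
      unfolding right_cancellative_def
    proof (intro ballI impI)
      fix x y z :: "'p \<times> 'g" assume e: "sdp_mult \<theta> y x = sdp_mult \<theta> z x"
      obtain p g q h r k where xyz: "x = (p, g)" "y = (q, h)" "z = (r, k)"
        by (cases x, cases y, cases z)
      from e have "q * p = r * p" "\<theta> p h = \<theta> p k" by (auto simp: sdp_mult_def xyz)
      then have "q = r" "h = k" using c
        by (auto simp: cancellative_def right_cancellative_def inj_def)
      then show "y = z" using xyz by simp
    qed
    then show "cancellative UNIV (sdp_mult \<theta>)" using lc2 by (simp add: cancellative_def)
  qed
  show ?thesis using P1 P2 P3 pid P5 P6 by blast
qed

end
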